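(* Let $a=a_1+a_2$ be a generalized core-EP decomposition of $a$ (i.e. $a_1^*a_2=a_2a_1=0$, $a_1$ is core invertible and $a_2\in\mathcal{A}^{qnil}$), and let $p=a_1a_1^{\mathrm{core}}$. Then $a=\begin{pmatrix} t&s\\ 0&n\end{pmatrix}_p$, where $t\in (p\mathcal{A}p)^{-1}$, $n\in (p^{\pi}\mathcal{A}p^{\pi})^{qnil}$.
   Context: $\mathcal{A}$ is a complex Banach *-algebra with identity; $\mathcal{A}^{qnil}$ is the set of quasinilpotent elements. An element $a$ is core invertible if there is $x$ with $a=axa$, $x\mathcal{A}=a\mathcal{A}$, $\mathcal{A}x=\mathcal{A}a^*$; such $x$ is unique and denoted $a^{\mathrm{core}}$. For a projection $p$ ($p=p^2=p^*$), $p^\pi=1-p$, and any $x\in\mathcal{A}$ is written as $x=\begin{pmatrix} pxp&px(1-p)\\ (1-p)xp&(1-p)x(1-p)\end{pmatrix}_p$. *)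

theory Defs
  imports "HOL-Analysis.Analysis"
begin

text \<open>HOL-Analysis only provides real
  normed algebras, so the complex scalar multiplication and the involution are
  added as class parameters with the usual axioms.\<close>

class banach_star_algebra = banach + real_normed_algebra_1 +
  fixes cscale :: "complex \<Rightarrow> 'a \<Rightarrow> 'a"
    and adj :: "'a \<Rightarrow> 'a"
  assumes cscale_of_real: "cscale (complex_of_real r) x = scaleR r x"
    and cscale_add_right: "cscale c (x + y) = cscale c x + cscale c y"
    and cscale_add_left: "cscale (c + d) x = cscale c x + cscale d x"
    and cscale_cscale: "cscale c (cscale d x) = cscale (c * d) x"
    and cscale_one: "cscale 1 x = x"
    and norm_cscale: "norm (cscale c x) = cmod c * norm x"
    and cscale_mult_left: "cscale c (x * y) = cscale c x * y"
    and cscale_mult_right: "cscale c (x * y) = x * cscale c y"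
    and adj_add: "adj (x + y) = adj x + adj y"
    and adj_cscale: "adj (cscale c x) = cscale (cnj c) (adj x)"
    and adj_mult: "adj (x * y) = adj y * adj x"
    and adj_adj: "adj (adj x) = x"

definition is_core_inverse :: "'a::banach_star_algebra \<Rightarrow> 'a \<Rightarrow> bool" where
  "is_core_inverse a x \<longleftrightarrow> a = a * x * a
     \<and> range (\<lambda>z. x * z) = range (\<lambda>z. a * z)
     \<and> range (\<lambda>z. z * x) = range (\<lambda>z. z * adj a)"

definition core_invertible :: "'a::banach_star_algebra \<Rightarrow> bool" where
  "core_invertible a \<longleftrightarrow> (\<exists>x. is_core_inverse a x)"

definition core_inverse :: "'a::banach_star_algebra \<Rightarrow> 'a" where
  "core_inverse a = (THE x. is_core_inverse a x)"

text \<open>Invertibility in the corner algebra e A e (unit e); for e = 1 this is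
  ordinary invertibility in A.\<close>
definition corner_invertible :: "'a::banach_star_algebra \<Rightarrow> 'a \<Rightarrow> bool" where
  "corner_invertible e t \<longleftrightarrow> t = e * t * e \<and>
     (\<exists>y. y = e * y * e \<and> t * y = e \<and> y * t = e)"

text \<open>Quasinilpotent in the corner algebra e A e: an element of e A e whose spectrum
  (relative to e A e) is {0}, i.e. \<lambda> e - n is invertible in e A e for all \<lambda> \<noteq> 0.\<close>
definition corner_qnil :: "'a::banach_star_algebra \<Rightarrow> 'a \<Rightarrow> bool" where
  "corner_qnil e n \<longleftrightarrow> n = e * n * e \<and>
     (\<forall>l::complex. l \<noteq> 0 \<longrightarrow> corner_invertible e (cscale l e - n))"

definition qnil :: "'a::banach_star_algebra \<Rightarrow> bool" where
  "qnil a \<longleftrightarrow> (\<forall>l::complex. l \<noteq> 0 \<longrightarrow> corner_invertible 1 (cscale l 1 - a))"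

end

theory Submission
  imports Defs
begin

lemma core_facts:
  fixes a x :: "'a::banach_star_algebra"
  assumes "is_core_inverse a x"
  shows "a = a * x * a" "x * a * x = x" "adj (a * x) = a * x" "(a*x)*(a*x) = a*x"
    "\<exists>u. x = a * u" "\<exists>r. a = x * r" "\<exists>v. x = v * adj a"
proof -
  have A: "a = a * x * a" using assms unfolding is_core_inverse_def by blast
  have R: "range (\<lambda>z. x * z) = range (\<lambda>z. a * z)" and L: "range (\<lambda>z. z * x) = range (\<lambda>z. z * adj a)"
    using assms unfolding is_core_inverse_def by blast+
  have "x \<in> range (\<lambda>z. a * z)" using R by (metis mult.right_neutral rangeI)
  then obtain u where u: "x = a * u" by auto
  have "a \<in> range (\<lambda>z. x * z)" using R by (metis mult.right_neutral rangeI)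
  then obtain r where r: "a = x * r" by auto
  have "x \<in> range (\<lambda>z. z * adj a)" using L by (metis mult.left_neutral rangeI)
  then obtain v where v: "x = v * adj a" by auto
  have aa: "adj a = adj a * adj x * adj a" using A by (metis adj_mult mult.assoc)
  have x1: "x = x * adj x * adj a" using v aa by (metis mult.assoc)
  have sa: "a * x = (a*x) * adj (a*x)" using x1 by (metis adj_mult mult.assoc)
  show "adj (a * x) = a * x" using sa by (metis adj_adj adj_mult mult.assoc)
  then have pa: "adj x * adj a = a * x" by (simp add: adj_mult)
  have "adj a = adj a * (a * x)" using aa pa by (metis mult.assoc)
  then have "x = x * (a * x)" using v by (metis mult.assoc)
  then show "x * a * x = x" by (simp add: mult.assoc)
  show "a = a * x * a" by (rule A)
  show "(a*x)*(a*x) = a*x" using A by (metis mult.assoc)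
  show "\<exists>u. x = a * u" "\<exists>r. a = x * r" "\<exists>v. x = v * adj a" using u r v by blast+
qed

lemma core_unique:
  fixes a x y :: "'a::banach_star_algebra"
  assumes X: "is_core_inverse a x" and Y: "is_core_inverse a y"
  shows "x = y"
proof -
  note fx = core_facts[OF X] and fy = core_facts[OF Y]
  obtain u where u: "x = a * u" using fx(5) by blast
  obtain u' where u': "y = a * u'" using fy(5) by blast
  obtain r where r: "a = x * r" using fx(6) by blast
  obtain r' where r': "a = y * r'" using fy(6) by blast
  have p1: "(a*y)*(a*x) = a*x" using u fy(1) by (metis mult.assoc)
  have p2: "(a*x)*(a*y) = a*y" using u' fx(1) by (metis mult.assoc)
  have "a*x = adj (a*x)" using fx(3) by simp
  also have "\<dots> = adj ((a*y)*(a*x))" using p1 by simp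
  also have "\<dots> = (a*x)*(a*y)" using fx(3) fy(3) by (simp add: adj_mult)
  also have "\<dots> = a*y" by (rule p2)
  finally have axy: "a*x = a*y" .
  have qa: "x*a*a = a" using r fx(2) by (metis mult.assoc)
  have qa': "y*a*a = a" using r' fy(2) by (metis mult.assoc)
  have "(y*a)*(x*a) = x*a" using u qa' by (metis mult.assoc)
  have k1: "(x*a)*(y*a) = x*a"
    using fy(1) by (metis mult.assoc)
  have "(y*a)*(x*a) = y*a" using fx(1) by (metis mult.assoc)
  have k2: "(x*a)*(y*a) = y*a" using u' qa by (metis mult.assoc)
  have xa: "x*a = y*a" using k1 k2 by simp
  have "x = x*a*x" using fx(2) by simp
  also have "\<dots> = y*a*y" using xa axy by (metis mult.assoc)
  also have "\<dots> = y" using fy(2) by simp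
  finally show ?thesis .
qed

lemma core_inverse_eq:
  assumes "is_core_inverse a x" shows "core_inverse a = x"
  unfolding core_inverse_def using assms core_unique by blast

theorem lemma4p1:
  fixes a a1 a2 :: "'a::banach_star_algebra"
  assumes "a = a1 + a2"
    and "adj a1 * a2 = 0"
    and "a2 * a1 = 0"
    and "core_invertible a1"
    and "qnil a2"
  defines "p \<equiv> a1 * core_inverse a1"
  shows "p * p = p \<and> adj p = p \<and>
    (\<exists>t s n. p * a * p = t \<and> p * a * (1 - p) = s \<and> (1 - p) * a * p = 0
       \<and> (1 - p) * a * (1 - p) = n
       \<and> corner_invertible p t \<and> corner_qnil (1 - p) n)"
proof -
  obtain x where X: "is_core_inverse a1 x" using assms(4) unfolding core_invertible_def by blast
  have pdef: "p = a1 * x" using core_inverse_eq[OF X] p_def by simp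
  note f = core_facts[OF X]
  obtain u where u: "x = a1 * u" using f(5) by blast
  obtain r where r: "a1 = x * r" using f(6) by blast
  have pp: "p * p = p" using f(4) pdef by simp
  have ap: "adj p = p" using f(3) pdef by simp
  have pa1: "p * a1 = a1" using f(1) pdef by simp
  have px: "p * x = x" using u pdef f(1) by (metis mult.assoc)
  have xp: "x * p = x" using f(2) pdef by (simp add: mult.assoc)
  have pa2: "p * a2 = 0"
  proof -
    have "p = adj x * adj a1" using ap pdef by (metis adj_mult)
    then show ?thesis using assms(2) by (simp add: mult.assoc)
  qed
  have a2p: "a2 * p = 0" using assms(3) pdef by (metis mult.assoc mult_zero_left)
  have lowz: "(1 - p) * a * p = 0"
    using assms(1) pa1 pa2 a2p by (simp add: algebra_simps)
  have tdef: "p * a * p = a1 * p"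
    using assms(1) pa1 pa2 a2p by (simp add: algebra_simps)
  have ndef: "(1 - p) * a * (1 - p) = a2"
  proof -
    have "p * a1 * p = a1 * p" using pa1 by simp
    then show ?thesis using assms(1) pa1 pa2 a2p by (simp add: algebra_simps)
  qed
  have ci: "corner_invertible p (a1 * p)"
    unfolding corner_invertible_def
  proof (intro conjI exI)
    show "a1 * p = p * (a1 * p) * p" using pa1 pp by (metis mult.assoc)
    show "x = p * x * p" using px xp by simp
    show "a1 * p * x = p" using px pdef by (metis mult.assoc)
    have "x * a1 * a1 * x = x * a1 * x * r * x" using r by (metis mult.assoc)
    also have "\<dots> = a1 * x" using f(2) r by simp
    finally show "x * (a1 * p) = p" using pdef by (simp add: mult.assoc)
  qed
  define e where "e = 1 - p"
  have ee: "e * e = e" using pp unfolding e_def by (simp add: algebra_simps)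
  have a2e: "a2 * e = a2" "e * a2 = a2" using pa2 a2p unfolding e_def by (simp_all add: algebra_simps)
  have cq: "corner_qnil e a2"
    unfolding corner_qnil_def
  proof (intro conjI allI impI)
    show "a2 = e * a2 * e" using a2e by simp
    fix l :: complex assume "l \<noteq> 0"
    then obtain z where z1: "(cscale l 1 - a2) * z = 1" and z2: "z * (cscale l 1 - a2) = 1"
      using assms(5) unfolding qnil_def corner_invertible_def by auto
    define c where "c = cscale l (1::'a)"
    have cl: "\<And>w. c * w = cscale l w" unfolding c_def by (metis cscale_mult_left mult_1_left)
    have cr: "\<And>w. w * c = cscale l w" unfolding c_def by (metis cscale_mult_right mult_1_right)
    have ce: "cscale l e = c * e" using cl by simp
    have comm: "p * (c - a2) = (c - a2) * p" using cl cr pa2 a2p by (simp add: algebra_simps)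
    have z1': "(c - a2) * z = 1" and z2': "z * (c - a2) = 1" using z1 z2 c_def by simp_all
    have pz: "p * z = z * p"
    proof -
      have "p * z = z * (c - a2) * p * z" using z2' by simp
      also have "\<dots> = z * p * ((c - a2) * z)" using comm by (metis mult.assoc)
      finally show ?thesis using z1' by simp
    qed
    have ez: "e * z = z * e" using pz unfolding e_def by (simp add: algebra_simps)
    have k1: "c * e - a2 = (c - a2) * e" using a2e by (simp add: algebra_simps)
    have cee: "c * e = e * c" using cl cr by simp
    have k2: "c * e - a2 = e * (c - a2)" using a2e cee by (simp add: right_diff_distrib)
    show "corner_invertible e (cscale l e - a2)"
      unfolding corner_invertible_def ce
    proof (intro conjI exI)
      show "c * e - a2 = e * (c * e - a2) * e" using k1 k2 ee by (metis mult.assoc)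
      show "e * z * e = e * (e * z * e) * e" using ee by (metis mult.assoc)
      have eze: "e * z * e = z * e" using ez ee by (metis mult.assoc)
      have eze2: "e * z * e = e * z" using ez ee by (metis mult.assoc)
      have "(c * e - a2) * (e * z * e) = (c - a2) * (e * (z * e))" using k1 eze by (simp add: mult.assoc)
      also have "\<dots> = (c - a2) * z * (e * e)" using ez by (metis mult.assoc)
      also have "\<dots> = e" using z1' ee by simp
      finally show "(c * e - a2) * (e * z * e) = e" .
      have "e * z * e * (c * e - a2) = (e * z * e) * (e * (c - a2))" using k2 by simp
      also have "\<dots> = (e * z) * (e * e) * (c - a2)" by (simp only: mult.assoc)
      also have "\<dots> = (e * z * e) * (c - a2)" using ee by (simp only: mult.assoc)
      also have "\<dots> = e * (z * (c - a2))" using eze2 by (simp only: mult.assoc)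
      also have "\<dots> = e" using z2' by simp
      finally show "e * z * e * (c * e - a2) = e" .
    qed
  qed
  show ?thesis using pp ap lowz tdef ndef ci cq e_def by blast
qed

end
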